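(* Let $\Lambda=[\mu_1,L_1]\cup[\mu_2,L_2]$ with $0<\mu_1<L_1\le\mu_2<L_2$ and $L_1-\mu_1=L_2-\mu_2$, set $\rho=\frac{L_2+\mu_1}{L_2-\mu_1}$, $R=\frac{\mu_2-L_1}{L_2-\mu_1}$, $m=\left(\frac{\sqrt{\rho^2-R^2}-\sqrt{\rho^2-1}}{\sqrt{1-R^2}}\right)^2$, $h_0=\frac{1+m}{L_1}$, $h_1=\frac{1+m}{\mu_2}$, and $$\sigma_2^\Lambda(\lambda)=\frac{1}{2m}(1+m-\lambda h_0)(1+m-\lambda h_1)-1.$$ Then for every integer $n\ge1$, with $t=2n$, the polynomial $\lambda\mapsto \frac{T_n(\sigma_2^\Lambda(\lambda))}{T_n(\sigma_2^\Lambda(0))}$ is a minimizer of $\sup_{\lambda\in\Lambda}|P(\lambda)|$ over all real polynomials $P$ of degree at most $t$ with $P(0)=1$.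
   Context: $T_n$ denotes the Chebyshev polynomial of the first kind of degree $n$ ($T_0=1$, $T_1(x)=x$, $T_{n+1}=2xT_n-T_{n-1}$). *)

theory Defs
  imports "HOL-Analysis.Analysis" "HOL-Computational_Algebra.Polynomial"
begin

fun cheb_T :: "nat \<Rightarrow> real poly" where
  "cheb_T 0 = 1"
| "cheb_T (Suc 0) = [:0, 1:]"
| "cheb_T (Suc (Suc n)) = [:0, 2:] * cheb_T (Suc n) - cheb_T n"

end

theory Submission
  imports Defs
begin

lemma cheb_cos: "poly (cheb_T k) (cos th) = cos (real k * th)"
proof (induction k rule: cheb_T.induct)
  case 1 then show ?case by simp
next
  case 2 then show ?case by simp
next
  case (3 n)
  have "cos (real (Suc (Suc n)) * th) = 2 * cos th * cos (real (Suc n) * th) - cos (real n * th)"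
  proof -
    have a: "real (Suc (Suc n)) * th = real (Suc n) * th + th" by (simp add: algebra_simps)
    have b: "real n * th = real (Suc n) * th - th" by (simp add: algebra_simps)
    show ?thesis unfolding a b cos_add cos_diff by (simp add: algebra_simps)
  qed
  then show ?case using 3 by simp
qed

lemma cheb_bound: assumes "\<bar>x\<bar> \<le> 1" shows "\<bar>poly (cheb_T k) x\<bar> \<le> 1"
proof -
  have "x = cos (arccos x)" using assms by simp
  then have "poly (cheb_T k) x = cos (real k * arccos x)" by (metis cheb_cos)
  then show ?thesis by simp
qed

lemma cheb_ge1_aux: assumes "x \<ge> 1" shows "1 \<le> poly (cheb_T k) x \<and> poly (cheb_T k) x \<le> poly (cheb_T (Suc k)) x"
proof (induction k)
  case 0 then show ?case using assms by simp
next
  case (Suc k)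
  have "poly (cheb_T (Suc (Suc k))) x = 2 * x * poly (cheb_T (Suc k)) x - poly (cheb_T k) x" by simp
  moreover have "2 * x * poly (cheb_T (Suc k)) x \<ge> 2 * poly (cheb_T (Suc k)) x"
    using Suc assms by (simp add: mult_right_mono)
  ultimately show ?case using Suc by linarith
qed

lemma cheb_ge1: "x \<ge> 1 \<Longrightarrow> poly (cheb_T k) x \<ge> 1"
  using cheb_ge1_aux by blast

lemma cheb_degree: "degree (cheb_T k) \<le> k"
proof (induction k rule: cheb_T.induct)
  case 1 then show ?case by simp
next
  case 2 then show ?case by simp
next
  case (3 n)
  have "degree ([:0, 2:] * cheb_T (Suc n)) \<le> Suc (Suc n)"
    using degree_mult_le[of "[:0,2::real:]" "cheb_T (Suc n)"] 3 by simp
  moreover have "degree (cheb_T n) \<le> Suc (Suc n)" using 3 by simp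
  ultimately show ?case by (simp add: degree_diff_le)
qed

theorem proposition3:
  fixes \<mu>1 L1 \<mu>2 L2 :: real and n :: nat
  assumes "0 < \<mu>1" "\<mu>1 < L1" "L1 \<le> \<mu>2" "\<mu>2 < L2"
    and "L1 - \<mu>1 = L2 - \<mu>2"
    and "n \<ge> 1"
  defines "\<Lambda> \<equiv> {\<mu>1..L1} \<union> {\<mu>2..L2}"
    and "\<rho> \<equiv> (L2 + \<mu>1) / (L2 - \<mu>1)"
    and "R \<equiv> (\<mu>2 - L1) / (L2 - \<mu>1)"
  defines "m \<equiv> ((sqrt (\<rho>^2 - R^2) - sqrt (\<rho>^2 - 1)) / sqrt (1 - R^2))^2"
  defines "h0 \<equiv> (1 + m) / L1" and "h1 \<equiv> (1 + m) / \<mu>2"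
  defines "\<sigma> \<equiv> smult (1 / (2 * m)) ([:1 + m, - h0:] * [:1 + m, - h1:]) - 1"
  defines "Q \<equiv> smult (1 / poly (cheb_T n) (poly \<sigma> 0)) (pcompose (cheb_T n) \<sigma>)"
  defines "t \<equiv> 2 * n"
  shows "degree Q \<le> t \<and> poly Q 0 = 1 \<and>
    (\<forall>P :: real poly. degree P \<le> t \<and> poly P 0 = 1 \<longrightarrow>
       (SUP x\<in>\<Lambda>. \<bar>poly Q x\<bar>) \<le> (SUP x\<in>\<Lambda>. \<bar>poly P x\<bar>))"
proof -
  note hyp = assms(1-6)
  define p where "p = L1 - \<mu>1"
  define q where "q = \<mu>2 - \<mu>1"
  define a where "a = sqrt (L1 * \<mu>2)"
  define b where "b = sqrt (L2 * \<mu>1)"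
  define w where "w = sqrt (p * q)"
  define D where "D = L2 - \<mu>1"
  have p0: "p > 0" and q0: "q > 0" and D0: "D > 0" using hyp unfolding p_def q_def D_def by auto
  have L2e: "L2 = \<mu>2 + L1 - \<mu>1" using hyp by simp
  have a2: "a^2 = L1 * \<mu>2" unfolding a_def using hyp by simp
  have b2: "b^2 = L2 * \<mu>1" unfolding b_def using hyp by simp
  have w2: "w^2 = p * q" unfolding w_def using p0 q0 by simp
  have a0: "a \<ge> 0" "b \<ge> 0" "w > 0" unfolding a_def b_def w_def using p0 q0 hyp by auto
  have abw: "a^2 - b^2 = w^2" unfolding a2 b2 w2 p_def q_def L2e by (simp add: algebra_simps)
  have ab: "a > b"
  proof (rule ccontr)
    assume "\<not> b < a"
    then have "a^2 \<le> b^2" using a0 by (intro power_mono) auto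
    moreover have "w^2 > 0" using a0 by simp
    ultimately show False using abw by linarith
  qed
  have s1: "sqrt (\<rho>^2 - R^2) = 2 * a / D"
  proof (rule real_sqrt_unique)
    have "(2 * a / D)^2 = 4 * (L1 * \<mu>2) / D^2" by (simp add: power_divide power_mult_distrib a2)
    moreover have "\<rho>^2 - R^2 = ((L2 + \<mu>1)^2 - (\<mu>2 - L1)^2) / D^2"
      unfolding \<rho>_def R_def using D0 unfolding D_def by (simp add: power_divide field_simps)
    moreover have "(L2 + \<mu>1)^2 - (\<mu>2 - L1)^2 = 4 * (L1 * \<mu>2)"
      unfolding L2e by (simp add: algebra_simps power2_eq_square)
    ultimately show "(2 * a / D)^2 = \<rho>^2 - R^2" by simp
  qed (use a0 D0 in auto)
  have s2: "sqrt (\<rho>^2 - 1) = 2 * b / D"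
  proof (rule real_sqrt_unique)
    have "(2 * b / D)^2 = 4 * (L2 * \<mu>1) / D^2" by (simp add: power_divide power_mult_distrib b2)
    moreover have "\<rho>^2 - 1 = ((L2 + \<mu>1)^2 - D^2) / D^2"
      unfolding \<rho>_def using D0 unfolding D_def by (simp add: power_divide field_simps)
    moreover have "(L2 + \<mu>1)^2 - D^2 = 4 * (L2 * \<mu>1)"
      unfolding D_def by (simp add: algebra_simps power2_eq_square)
    ultimately show "(2 * b / D)^2 = \<rho>^2 - 1" by simp
  qed (use a0 D0 in auto)
  have s3: "sqrt (1 - R^2) = 2 * w / D"
  proof (rule real_sqrt_unique)
    have "(2 * w / D)^2 = 4 * (p * q) / D^2" by (simp add: power_divide power_mult_distrib w2)
    moreover have "1 - R^2 = (D^2 - (\<mu>2 - L1)^2) / D^2"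
      unfolding R_def using D0 unfolding D_def by (simp add: power_divide field_simps)
    moreover have "D^2 - (\<mu>2 - L1)^2 = 4 * (p * q)"
      unfolding D_def p_def q_def L2e by (simp add: algebra_simps power2_eq_square)
    ultimately show "(2 * w / D)^2 = 1 - R^2" by simp
  qed (use a0 D0 in auto)
  have m1: "m = (a - b)^2 / w^2" unfolding m_def s1 s2 s3 using D0 a0
    by (simp add: field_simps power2_eq_square)
  have m2: "m = (a - b) / (a + b)"
  proof -
    have e: "w^2 = (a-b)*(a+b)" using abw by (simp add: algebra_simps power2_eq_square)
    have "a - b \<noteq> 0" "a + b \<noteq> 0" using ab a0 by auto
    then show ?thesis unfolding m1 e by (simp add: power2_eq_square)
  qed
  have mpos: "m > 0" unfolding m2 using ab a0 by simp
  have key: "(1 + m)^2 * (p * q) = 4 * m * (L1 * \<mu>2)"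
  proof -
    have h1: "1 + m = 2 * a / (a + b)" unfolding m2 using ab a0 by (simp add: field_simps)
    have h2: "p * q = (a-b)*(a+b)" using abw w2 by (simp add: algebra_simps power2_eq_square)
    have nz: "a + b \<noteq> 0" using ab a0 by auto
    have "(1 + m)^2 * (p * q) = (2 * a / (a + b))^2 * ((a-b)*(a+b))" by (simp only: h1 h2)
    also have "\<dots> = 4 * ((a - b) / (a + b)) * a^2" using nz by (simp add: power_divide power2_eq_square divide_simps)
    finally show ?thesis unfolding m2[symmetric] a2 .
  qed
  define c where "c = (L1 + \<mu>2) / 2"
  define g where "g = (\<mu>2 - L1) / 2"
  define r where "r = (L2 - \<mu>1) / 2"
  define f where "f = (\<lambda>x. 2 * ((x - c)^2 - g^2) / (p * q) - 1)"
  have g0: "g \<ge> 0" unfolding g_def using hyp by simp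
  have rg: "r^2 = g^2 + p * q" unfolding r_def g_def p_def q_def L2e by (simp add: power2_eq_square field_simps)
  have r0: "r \<ge> 0" unfolding r_def using hyp by simp
  have cg: "c - g = L1" "c + g = \<mu>2" "c - r = \<mu>1" "c + r = L2" unfolding c_def g_def r_def L2e by (auto simp: field_simps)
  have sig: "poly \<sigma> x = f x" for x
  proof -
    have A: "poly \<sigma> x = (1/(2*m)) * ((1+m - h0*x) * (1+m - h1*x)) - 1"
      unfolding \<sigma>_def using mpos by (simp add: field_simps)
    have B: "1+m - h0*x = (1+m) * (L1 - x) / L1" unfolding h0_def using hyp by (simp add: field_simps)
    have C: "1+m - h1*x = (1+m) * (\<mu>2 - x) / \<mu>2" unfolding h1_def using hyp by (simp add: field_simps)
    have D: "(1/(2*m)) * ((1+m) * (L1 - x) / L1 * ((1+m) * (\<mu>2 - x) / \<mu>2))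
       = ((1+m)^2 / (2*m*(L1*\<mu>2))) * ((L1 - x) * (\<mu>2 - x))"
      by (simp add: power2_eq_square mult_ac)
    have E: "(1+m)^2 / (2*m*(L1*\<mu>2)) = 2 / (p*q)"
      using key mpos hyp p0 q0 by (simp add: divide_simps)
    have F: "(L1 - x) * (\<mu>2 - x) = (x - c)^2 - g^2" unfolding c_def g_def by (simp add: power2_eq_square field_simps)
    show ?thesis unfolding A B C D E F f_def by simp
  qed
  have fL: "\<bar>f x\<bar> \<le> 1" if "x \<in> \<Lambda>" for x
  proof -
    have e: "(x - c)^2 - g^2 = (x - L1) * (x - \<mu>2)" unfolding c_def g_def by (simp add: power2_eq_square field_simps)
    have "0 \<le> (x - L1) * (x - \<mu>2) \<and> (x - L1) * (x - \<mu>2) \<le> p * q"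
    proof (cases "x \<le> L1")
      case True
      then have x: "\<mu>1 \<le> x" "x \<le> L1" using that hyp unfolding \<Lambda>_def by auto
      have "(L1 - x) * (\<mu>2 - x) \<le> p * q" unfolding p_def q_def
        using x hyp by (intro mult_mono) auto
      moreover have "0 \<le> (L1 - x) * (\<mu>2 - x)" using x hyp by simp
      ultimately show ?thesis by (simp add: algebra_simps)
    next
      case False
      then have x: "\<mu>2 \<le> x" "x \<le> L2" using that hyp unfolding \<Lambda>_def by auto
      have "(x - L1) * (x - \<mu>2) \<le> q * p" unfolding p_def q_def
        using x hyp by (intro mult_mono) auto
      moreover have "0 \<le> (x - L1) * (x - \<mu>2)" using x hyp by simp
      ultimately show ?thesis by (simp add: algebra_simps)
    qed
    then show ?thesis unfolding f_def e using p0 q0 by (simp add: field_simps abs_le_iff)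
  qed
  have f0: "f 0 \<ge> 1"
  proof -
    have "(0 - c)^2 - g^2 = L1 * \<mu>2" unfolding c_def g_def by (simp add: power2_eq_square field_simps)
    moreover have "p * q \<le> L1 * \<mu>2"
    proof -
      have "L1 * \<mu>2 - p * q = \<mu>1 * (L1 + \<mu>2 - \<mu>1)" unfolding p_def q_def by (simp add: algebra_simps)
      moreover have "\<mu>1 * (L1 + \<mu>2 - \<mu>1) \<ge> 0" using hyp by simp
      ultimately show ?thesis by linarith
    qed
    ultimately show ?thesis unfolding f_def using p0 q0 by (simp add: field_simps)
  qed
  define T0 where "T0 = poly (cheb_T n) (f 0)"
  have T0: "T0 \<ge> 1" unfolding T0_def using cheb_ge1 f0 by blast
  define E where "E = 1 / T0"
  have E0: "E > 0" unfolding E_def using T0 by simp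
  have Qx: "poly Q x = E * poly (cheb_T n) (f x)" for x
    unfolding Q_def E_def T0_def by (simp add: poly_pcompose sig)
  have degQ: "degree Q \<le> t"
  proof -
    have "degree \<sigma> \<le> 2"
    proof -
      have "degree ([:1 + m, - h0:] * [:1 + m, - h1:]) \<le> 2"
        using degree_mult_le[of "[:1 + m, - h0:]" "[:1 + m, - h1:]"] by simp
      then show ?thesis unfolding \<sigma>_def by (simp add: degree_diff_le)
    qed
    then have "degree (pcompose (cheb_T n) \<sigma>) \<le> n * 2"
      using degree_pcompose_le[of "cheb_T n" \<sigma>] cheb_degree[of n]
      by (meson le_trans mult_le_mono)
    then show ?thesis unfolding Q_def t_def by simp
  qed
  have Q0: "poly Q 0 = 1" using Qx[of 0] T0 unfolding E_def T0_def by simp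
  have Qbound: "\<bar>poly Q x\<bar> \<le> E" if "x \<in> \<Lambda>" for x
    using cheb_bound[OF fL[OF that], of n] E0 unfolding Qx by (simp add: abs_mult)
  have Lne: "\<Lambda> \<noteq> {}" unfolding \<Lambda>_def using hyp by auto
  have supQ: "(SUP x\<in>\<Lambda>. \<bar>poly Q x\<bar>) \<le> E"
    using Lne Qbound by (intro cSUP_least) auto
  have cb: "0 \<le> (1 + cos y) * (p * q)" "(1 + cos y) * (p * q) \<le> 2 * (p * q)" for y
  proof -
    have "0 \<le> 1 + cos y" "1 + cos y \<le> 2" using cos_ge_minus_one[of y] cos_le_one[of y] by linarith+
    then show "0 \<le> (1 + cos y) * (p * q)" "(1 + cos y) * (p * q) \<le> 2 * (p * q)"
      using p0 q0 by (auto intro: mult_right_mono)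
  qed
  define S where "S = (\<lambda>k::nat. sqrt (g^2 + (1 + cos (real k * pi / n)) * (p * q) / 2))"
  define kk where "kk = (\<lambda>j::nat. if j \<le> n then j else 2 * n + 1 - j)"
  define z where "z = (\<lambda>j. if j \<le> n then c - S j else c + S (2 * n + 1 - j))"
  have Sge: "S k \<ge> g" for k
  proof -
    have "g^2 \<le> g^2 + (1 + cos (real k * pi / n)) * (p * q) / 2" using cb by simp
    then have "sqrt (g^2) \<le> S k" unfolding S_def by (rule real_sqrt_le_mono)
    then show ?thesis using g0 by simp
  qed
  have Sle: "S k \<le> r" for k
  proof -
    have "g^2 + (1 + cos (real k * pi / n)) * (p * q) / 2 \<le> r^2" unfolding rg using cb(2)[of "real k * pi / n"] by simp
    then have "S k \<le> sqrt (r^2)" unfolding S_def by (rule real_sqrt_le_mono)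
    then show ?thesis using r0 by simp
  qed
  have Smono: "S (Suc k) \<le> S k" if "Suc k \<le> n" for k
  proof -
    have "cos (real (Suc k) * pi / n) \<le> cos (real k * pi / n)"
    proof (rule cos_monotone_0_pi_le)
      have "real (Suc k) * pi \<le> real n * pi" using that by (intro mult_right_mono) auto
      moreover have "real n > 0" using hyp by simp
      ultimately show "real (Suc k) * pi / n \<le> pi" by (simp add: pos_divide_le_eq)
      show "real k * pi / n \<le> real (Suc k) * pi / n" using hyp by (simp add: divide_right_mono)
    qed simp
    then show ?thesis unfolding S_def using p0 q0
      by (intro real_sqrt_le_mono) (simp add: mult_right_mono)
  qed
  have zmono: "z j \<le> z (Suc j)" for j
  proof -
    consider "Suc j \<le> n" | "j = n" | "n < j" "j \<le> 2*n" | "j > 2*n" by linarith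
    then show ?thesis
    proof cases
      case 1 then show ?thesis unfolding z_def using Smono[OF 1] by auto
    next
      case 2 then show ?thesis unfolding z_def using Sge[of n] g0 by auto
    next
      case 3
      then have "2*n+1-j = Suc (2*n+1 - Suc j)" "Suc (2*n+1 - Suc j) \<le> n" by auto
      then show ?thesis unfolding z_def using 3 Smono[of "2*n+1 - Suc j"] by auto
    next
      case 4 then show ?thesis unfolding z_def by auto
    qed
  qed
  have zinc: "z i \<le> z j" if "i \<le> j" for i j
    using zmono that by (meson incseq_SucI incseqD)
  have zL: "z j \<in> \<Lambda>" for j
    unfolding z_def \<Lambda>_def using Sge Sle cg by (auto simp: algebra_simps) (smt (verit))+
  have fz: "f (z j) = cos (real (kk j) * pi / n)" for j
  proof -
    have rad: "0 \<le> g^2 + (1 + cos (real (kk j) * pi / n)) * (p * q) / 2" using cb by simp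
    have "(z j - c)^2 = (S (kk j))^2" unfolding z_def kk_def by auto
    also have "\<dots> = g^2 + (1 + cos (real (kk j) * pi / n)) * (p * q) / 2" unfolding S_def using rad by simp
    finally show ?thesis unfolding f_def using p0 q0 by (simp add: field_simps)
  qed
  have Qz: "poly Q (z j) = E * (-1) ^ kk j" for j
  proof -
    have "real n * (real (kk j) * pi / n) = real (kk j) * pi" using hyp by simp
    then show ?thesis unfolding Qx fz cheb_cos by simp
  qed
  define J where "J = {0..<2*n+1} - {n}"
  have kkJ: "(-1::real) ^ kk (Suc j) = - ((-1) ^ kk j)" if jJ: "j \<in> J" for j
  proof -
    have "j < 2*n+1" "j \<noteq> n" using jJ unfolding J_def by auto
    then consider "Suc j \<le> n" | "n < j" "j \<le> 2*n" by linarith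
    then show ?thesis
    proof cases
      case 1 then show ?thesis unfolding kk_def by simp
    next
      case 2
      then have "kk j = Suc (kk (Suc j))" unfolding kk_def by auto
      then show ?thesis by simp
    qed
  qed
  have z0: "z j > 0" for j using zL[of j] hyp unfolding \<Lambda>_def by auto
  show ?thesis
  proof (intro conjI degQ Q0 allI impI)
    fix P :: "real poly"
    assume P: "degree P \<le> t \<and> poly P 0 = 1"
    show "(SUP x\<in>\<Lambda>. \<bar>poly Q x\<bar>) \<le> (SUP x\<in>\<Lambda>. \<bar>poly P x\<bar>)"
    proof (rule ccontr)
      assume neg: "\<not> ?thesis"
      then have lt: "(SUP x\<in>\<Lambda>. \<bar>poly P x\<bar>) < E" using supQ by linarith
      have cpt: "compact \<Lambda>" unfolding \<Lambda>_def by (intro compact_Un compact_Icc)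
      have "bounded ((\<lambda>x. \<bar>poly P x\<bar>) ` \<Lambda>)"
        by (intro compact_imp_bounded compact_continuous_image cpt continuous_intros)
      then have bdd: "bdd_above ((\<lambda>x. \<bar>poly P x\<bar>) ` \<Lambda>)" by (rule bounded_imp_bdd_above)
      have Pz: "\<bar>poly P (z j)\<bar> < E" for j
        using cSUP_upper[OF zL bdd, of j] lt by linarith
      define Dp where "Dp = Q - P"
      have Dz: "poly Dp (z j) * (-1) ^ kk j > 0" for j
      proof -
        have "poly Dp (z j) * (-1) ^ kk j = E - poly P (z j) * (-1) ^ kk j"
          unfolding Dp_def by (simp add: Qz algebra_simps)
        moreover have "\<bar>poly P (z j) * (-1) ^ kk j\<bar> < E" using Pz by (simp add: abs_mult)
        ultimately show ?thesis by linarith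
      qed
      have root: "\<exists>x. z j < x \<and> x < z (Suc j) \<and> poly Dp x = 0" if "j \<in> J" for j
      proof -
        have prod: "poly Dp (z j) * poly Dp (z (Suc j)) < 0"
        proof -
          have "(poly Dp (z j) * (-1) ^ kk j) * (poly Dp (z (Suc j)) * (-1) ^ kk (Suc j)) > 0"
            using Dz by (simp add: mult_pos_pos)
          then have "- (poly Dp (z j) * poly Dp (z (Suc j)) * ((-1) ^ kk j)^2) > 0"
            using kkJ[OF that] by (simp add: algebra_simps power2_eq_square)
          then show ?thesis by (simp add: power_even_eq[symmetric] )
        qed
        then have "z j \<noteq> z (Suc j)" by (metis not_square_less_zero)
        then have "z j < z (Suc j)" using zmono[of j] by simp
        from poly_IVT[OF this prod] show ?thesis by auto
      qed
      define rt where "rt = (\<lambda>j. SOME x. z j < x \<and> x < z (Suc j) \<and> poly Dp x = 0)"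
      have rt: "z j < rt j \<and> rt j < z (Suc j) \<and> poly Dp (rt j) = 0" if "j \<in> J" for j
        unfolding rt_def using someI_ex[OF root[OF that]] .
      have inj: "inj_on rt J"
      proof (rule linorder_inj_onI)
        fix i j assume "i < j" "i \<in> J" "j \<in> J"
        then have "rt i < z (Suc i)" "z (Suc i) \<le> z j" "z j < rt j" using rt zinc by auto
        then show "rt i \<noteq> rt j" by simp
      qed linarith
      have cardJ: "card J = 2 * n" unfolding J_def using hyp by simp
      have "0 \<notin> rt ` J" using rt z0 by (smt (verit) imageE)
      then have card: "card (insert 0 (rt ` J)) = 2 * n + 1"
        using card_image[OF inj] cardJ unfolding J_def by simp
      have sub: "insert 0 (rt ` J) \<subseteq> {x. poly Dp x = 0}"
        using rt P Q0 unfolding Dp_def by auto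
      have "Dp = 0"
      proof (rule ccontr)
        assume nz: "Dp \<noteq> 0"
        have "card (insert 0 (rt ` J)) \<le> card {x. poly Dp x = 0}"
          using sub poly_roots_finite[OF nz] by (rule card_mono[rotated])
        also have "\<dots> \<le> degree Dp" by (rule card_poly_roots_bound[OF nz])
        also have "\<dots> \<le> t" unfolding Dp_def using degQ P
          by (meson degree_diff_le)
        finally show False using card unfolding t_def by simp
      qed
      then have "P = Q" unfolding Dp_def by simp
      then show False using neg by simp
    qed
  qed
qed

end
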